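(* Let $\mathbf i$ be a reduced expression of $w_0$ whose standard seed satisfies properties (A), (B) and (C). Then for every $j\in J_{ex}(\mathbf i)$, $$\beta_jP_{\mathrm{in}(j)}=\beta_{j_+(\mathbf i)}P_{\mathrm{out}(j)}.$$
   Context: $\mathfrak g$ is a complex simple Lie algebra of simply-laced type, vertex set $I=\{1,\dots,n\}$, Cartan entries $i\cdot j$, Weyl group with simple reflections $s_i$, longest element $w_0$, $N=\ell(w_0)$, fundamental weights $\omega_i$. $\overline D:\mathbb C[\mathsf N]\to\mathbb C(\alpha_1,\dots,\alpha_n)$ is the algebra morphism $\overline D(f)=\sum_{\mathbf j}(f,e_{j_1}\cdots e_{j_r})\big(\alpha_{j_1}(\alpha_{j_1}+\alpha_{j_2})\cdots(\alpha_{j_1}+\dots+\alpha_{j_r})\big)^{-1}$ ($\mathbb C[\mathsf N]$ identified with the graded dual of $U(\mathfrak n)$, $e_i$ Chevalley generators, $\alpha_i$ indeterminates). Positive roots are linear forms in the $\alpha_i$; $(\beta;P)$ = multiplicity of $\beta$ in $P$. For a reduced expression $\mathbf i$: $\beta_j=s_{i_1}\cdots s_{i_{j-1}}(\alpha_{i_j})$; $j_-(\mathbf i)=\max(\{l<j:i_l=i_j\}\cup\{0\})$; $j_+(\mathbf i)=\min(\{l>j:i_l=i_j\}\cup\{N+1\})$; $J_{ex}(\mathbf i)=\{j:j_+(\mathbf i)\le N\}$; $x_j=D(s_{i_1}\cdots s_{i_j}\omega_{i_j},\omega_{i_j})$ are the flag minors (cluster variables of the standard seed). The quiver $Q^{\mathbf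 i}$ on $\{1,\dots,N\}$ has an (ordinary) arrow $u\to v$ iff $i_u\cdot i_v=-1$ and $u<v<u_+<v_+$, and a (horizontal) arrow $u_+\to u$ for each $u\in J_{ex}$. For $j\in J_{ex}$ let $\mathrm{inord}(j)$ (resp. $\mathrm{outord}(j)$) be the set of sources (resp. targets) of ordinary arrows into (resp. out of) $j$; set $P_{\mathrm{in}(j)}:=P_{j_+}\prod_{l\in\mathrm{inord}(j)}P_l$ and $P_{\mathrm{out}(j)}:=P_{j_-}\prod_{l\in\mathrm{outord}(j)}P_l$ with $P_0:=1$. Properties: (A) $\overline D(x_j)=1/P_j$ with $P_j$ a product of positive roots, for all $j$; (B) $P_jP_{j_-}=\beta_j\prod_{l<j<l_+,\,i_l\cdot i_j=-1}P_l$ for all $j$, with $P_0=1$; (C) $(\beta_i;P_j)-(\beta_i;P_{j_+})\le1$ for all $j\in J_{ex}$, $1\le i\le N$. *)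

theory Defs
  imports Main "HOL-Library.Multiset"
begin

text \<open>Weights/roots are integer coefficient vectors w.r.t. the simple roots alpha_1..alpha_n
  (i.e. linear forms in the alpha_i), represented as functions nat => int.\<close>

type_synonym lform = "nat \<Rightarrow> int"

definition simply_laced_simple_cartan :: "nat \<Rightarrow> (nat \<Rightarrow> nat \<Rightarrow> int) \<Rightarrow> bool" where
  "simply_laced_simple_cartan n C \<longleftrightarrow>
     n \<ge> 1 \<and>
     (\<forall>i\<in>{1..n}. C i i = 2) \<and>
     (\<forall>i\<in>{1..n}. \<forall>j\<in>{1..n}. i \<noteq> j \<longrightarrow> C i j = C j i \<and> (C i j = 0 \<or> C i j = -1)) \<and>
     (\<forall>v::lform. (\<forall>k. k \<notin> {1..n} \<longrightarrow> v k = 0) \<longrightarrow> v \<noteq> (\<lambda>_. 0) \<longrightarrow>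
        (\<Sum>i\<in>{1..n}. \<Sum>j\<in>{1..n}. v i * C i j * v j) > 0) \<and>
     (\<forall>S. S \<subseteq> {1..n} \<longrightarrow> S \<noteq> {} \<longrightarrow> (\<forall>i\<in>S. \<forall>j\<in>{1..n} - S. C i j = 0) \<longrightarrow> S = {1..n})"

definition simple_root :: "nat \<Rightarrow> lform" where
  "simple_root i = (\<lambda>k. if k = i then 1 else 0)"

text \<open>simple reflection s_i(v) = v - <v, alpha_i^vee> alpha_i\<close>
definition refl :: "nat \<Rightarrow> (nat \<Rightarrow> nat \<Rightarrow> int) \<Rightarrow> nat \<Rightarrow> lform \<Rightarrow> lform" where
  "refl n C i v = (\<lambda>k. if k = i then v k - (\<Sum>l\<in>{1..n}. v l * C l i) else v k)"

definition act :: "nat \<Rightarrow> (nat \<Rightarrow> nat \<Rightarrow> int) \<Rightarrow> nat list \<Rightarrow> lform \<Rightarrow> lform" where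
  "act n C ws = foldr (\<lambda>i f. refl n C i \<circ> f) ws id"

definition weyl_len :: "nat \<Rightarrow> (nat \<Rightarrow> nat \<Rightarrow> int) \<Rightarrow> (lform \<Rightarrow> lform) \<Rightarrow> nat" where
  "weyl_len n C w = (LEAST k. \<exists>ws. set ws \<subseteq> {1..n} \<and> length ws = k \<and> act n C ws = w)"

definition reduced_w0 :: "nat \<Rightarrow> (nat \<Rightarrow> nat \<Rightarrow> int) \<Rightarrow> nat list \<Rightarrow> bool" where
  "reduced_w0 n C ws \<longleftrightarrow> set ws \<subseteq> {1..n} \<and> weyl_len n C (act n C ws) = length ws \<and>
     (\<forall>u. set u \<subseteq> {1..n} \<longrightarrow> weyl_len n C (act n C u) \<le> length ws)"

definition roots :: "nat \<Rightarrow> (nat \<Rightarrow> nat \<Rightarrow> int) \<Rightarrow> lform set" where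
  "roots n C = {act n C ws (simple_root i) | ws i. set ws \<subseteq> {1..n} \<and> i \<in> {1..n}}"

definition pos_roots :: "nat \<Rightarrow> (nat \<Rightarrow> nat \<Rightarrow> int) \<Rightarrow> lform set" where
  "pos_roots n C = {b \<in> roots n C. \<forall>k. b k \<ge> 0}"

text \<open>positions are 1-based: letter ws j = i_j\<close>
definition letter :: "nat list \<Rightarrow> nat \<Rightarrow> nat" where
  "letter ws j = ws ! (j - 1)"

definition beta :: "nat \<Rightarrow> (nat \<Rightarrow> nat \<Rightarrow> int) \<Rightarrow> nat list \<Rightarrow> nat \<Rightarrow> lform" where
  "beta n C ws j = act n C (take (j - 1) ws) (simple_root (letter ws j))"

definition jminus :: "nat list \<Rightarrow> nat \<Rightarrow> nat" where
  "jminus ws j = Max ({l. 1 \<le> l \<and> l < j \<and> letter ws l = letter ws j} \<union> {0})"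

definition jplus :: "nat list \<Rightarrow> nat \<Rightarrow> nat" where
  "jplus ws j = Min ({l. j < l \<and> l \<le> length ws \<and> letter ws l = letter ws j} \<union> {length ws + 1})"

definition Jex :: "nat list \<Rightarrow> nat set" where
  "Jex ws = {j. 1 \<le> j \<and> j \<le> length ws \<and> jplus ws j \<le> length ws}"

definition ord_arrow :: "(nat \<Rightarrow> nat \<Rightarrow> int) \<Rightarrow> nat list \<Rightarrow> nat \<Rightarrow> nat \<Rightarrow> bool" where
  "ord_arrow C ws u v \<longleftrightarrow> u \<in> {1..length ws} \<and> v \<in> {1..length ws} \<and>
     C (letter ws u) (letter ws v) = -1 \<and> u < v \<and> v < jplus ws u \<and> jplus ws u < jplus ws v"

text \<open>Products of positive roots are represented as multisets of positive roots
  (multiplication = multiset sum, 1 = empty multiset); P_0 := 1.\<close>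
definition Pext :: "(nat \<Rightarrow> lform multiset) \<Rightarrow> nat \<Rightarrow> lform multiset" where
  "Pext P j = (if j = 0 then {#} else P j)"

definition P_in :: "(nat \<Rightarrow> nat \<Rightarrow> int) \<Rightarrow> nat list \<Rightarrow> (nat \<Rightarrow> lform multiset) \<Rightarrow> nat \<Rightarrow> lform multiset" where
  "P_in C ws P j = P (jplus ws j) + (\<Sum>l\<in>{u. ord_arrow C ws u j}. P l)"

definition P_out :: "(nat \<Rightarrow> nat \<Rightarrow> int) \<Rightarrow> nat list \<Rightarrow> (nat \<Rightarrow> lform multiset) \<Rightarrow> nat \<Rightarrow> lform multiset" where
  "P_out C ws P j = Pext P (jminus ws j) + (\<Sum>l\<in>{v. ord_arrow C ws j v}. P l)"

end

theory Submission
  imports Defs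
begin

lemma jplus_basic:
  assumes "l \<le> length ws"
  shows "l < jplus ws l \<and> jplus ws l \<le> length ws + 1 \<and>
         (jplus ws l \<le> length ws \<longrightarrow> letter ws (jplus ws l) = letter ws l)"
proof -
  let ?S = "{k. l < k \<and> k \<le> length ws \<and> letter ws k = letter ws l}"
  have f: "finite (?S \<union> {length ws + 1})" by (rule finite_UnI) (auto intro: finite_subset[of _ "{..length ws}"])
  have m: "jplus ws l \<in> ?S \<union> {length ws + 1}" unfolding jplus_def using Min_in[OF f] by blast
  have le: "jplus ws l \<le> length ws + 1" unfolding jplus_def using Min_le[OF f] by blast
  show ?thesis using m le assms by auto
qed

lemma jplus_min:
  assumes "l < k" "k \<le> length ws" "letter ws k = letter ws l"
  shows "jplus ws l \<le> k"
proof -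
  let ?S = "{k. l < k \<and> k \<le> length ws \<and> letter ws k = letter ws l}"
  have f: "finite (?S \<union> {length ws + 1})" by (rule finite_UnI) (auto intro: finite_subset[of _ "{..length ws}"])
  show ?thesis unfolding jplus_def using Min_le[OF f] assms by blast
qed

lemma jminus_jplus:
  assumes "1 \<le> j" "j < jplus ws j" "jplus ws j \<le> length ws" "letter ws (jplus ws j) = letter ws j"
  shows "jminus ws (jplus ws j) = j"
proof -
  let ?T = "{l. 1 \<le> l \<and> l < jplus ws j \<and> letter ws l = letter ws (jplus ws j)} \<union> {0}"
  have f: "finite ?T" by (rule finite_UnI) (auto intro: finite_subset[of _ "{..jplus ws j}"])
  have jin: "j \<in> ?T" using assms by auto
  have "x \<le> j" if "x \<in> ?T" for x
  proof (rule ccontr)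
    assume "\<not> x \<le> j"
    then have "j < x" "x < jplus ws j" "letter ws x = letter ws j" using that assms by auto
    then have "jplus ws j \<le> x" using jplus_min[of j x ws] assms by auto
    with \<open>x < jplus ws j\<close> show False by simp
  qed
  then show ?thesis unfolding jminus_def using f jin by (meson Max_eqI)
qed

theorem lemma6p3:
  fixes n :: nat and C :: "nat \<Rightarrow> nat \<Rightarrow> int" and ws :: "nat list"
    and P :: "nat \<Rightarrow> lform multiset"
  assumes cartan: "simply_laced_simple_cartan n C"
    and red: "reduced_w0 n C ws"
    and A: "\<forall>j\<in>{1..length ws}. \<forall>b\<in>#P j. b \<in> pos_roots n C"
    and B: "\<forall>j\<in>{1..length ws}. P j + Pext P (jminus ws j) =
              {#beta n C ws j#} +
              (\<Sum>l\<in>{l. 1 \<le> l \<and> l \<le> length ws \<and> l < j \<and> j < jplus ws l \<and>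
                       C (letter ws l) (letter ws j) = -1}. P l)"
    and Cprop: "\<forall>j\<in>Jex ws. \<forall>i\<in>{1..length ws}.
              int (count (P j) (beta n C ws i)) - int (count (P (jplus ws j)) (beta n C ws i)) \<le> 1"
  shows "\<forall>j\<in>Jex ws. {#beta n C ws j#} + P_in C ws P j
                    = {#beta n C ws (jplus ws j)#} + P_out C ws P j"
proof
  fix j assume jJ: "j \<in> Jex ws"
  define N where "N = length ws"
  define jp where "jp = jplus ws j"
  have j1: "1 \<le> j" "j \<le> N" and jpN: "jp \<le> N" using jJ unfolding Jex_def N_def jp_def by auto
  have jpj: "j < jp" "letter ws jp = letter ws j" using jplus_basic[of j ws] j1 jpN unfolding N_def jp_def by auto
  have letn: "letter ws l \<in> {1..n}" if "1 \<le> l" "l \<le> N" for l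
  proof -
    have "ws ! (l - 1) \<in> set ws" using that unfolding N_def by auto
    then show ?thesis using red unfolding reduced_w0_def letter_def by auto
  qed
  have Cdiag: "C i i = 2" if "i \<in> {1..n}" for i using cartan that unfolding simply_laced_simple_cartan_def by auto
  have Csym: "C a b = C b a" if "a \<in> {1..n}" "b \<in> {1..n}" for a b
    using cartan that unfolding simply_laced_simple_cartan_def by (cases "a = b") auto
  have jmjp: "jminus ws jp = j" using jminus_jplus[of j ws] j1 jpj jpN unfolding jp_def N_def by auto
  define Com where "Com = {l. 1 \<le> l \<and> l \<le> N \<and> l < j \<and> jp < jplus ws l \<and> C (letter ws l) (letter ws j) = -1}"
  define In where "In = {u. ord_arrow C ws u j}"
  define Out where "Out = {v. ord_arrow C ws j v}"
  define S0 where "S0 = {l. 1 \<le> l \<and> l \<le> length ws \<and> l < j \<and> j < jplus ws l \<and>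
                       C (letter ws l) (letter ws j) = -1}"
  define S1 where "S1 = {l. 1 \<le> l \<and> l \<le> length ws \<and> l < jp \<and> jp < jplus ws l \<and>
                       C (letter ws l) (letter ws jp) = -1}"
  have fin: "finite S0" "finite S1" "finite Com" "finite In" "finite Out"
    unfolding S0_def S1_def Com_def In_def Out_def ord_arrow_def
    by (auto intro: finite_subset[of _ "{..length ws}"] finite_subset[of _ "{..N}"])
  have S0eq: "S0 = Com \<union> In"
  proof (intro set_eqI iffI)
    fix l assume l: "l \<in> S0"
    then have l1: "1 \<le> l" "l \<le> N" "l < j" "j < jplus ws l" and lc: "C (letter ws l) (letter ws j) = -1"
      unfolding S0_def N_def by auto
    have ne: "jplus ws l \<noteq> jp"
    proof
      assume e: "jplus ws l = jp"
      then have "letter ws l = letter ws j" using jplus_basic[of l ws] l1 jpN jpj unfolding N_def by auto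
      then show False using lc Cdiag letn[OF j1] by simp
    qed
    show "l \<in> Com \<union> In"
    proof (cases "jplus ws l < jp")
      case True then show ?thesis using l1 lc j1 unfolding In_def ord_arrow_def jp_def N_def by auto
    next
      case False then show ?thesis using l1 lc ne unfolding Com_def by auto
    qed
  next
    fix l assume "l \<in> Com \<union> In"
    then show "l \<in> S0" using jpj unfolding Com_def In_def S0_def ord_arrow_def N_def jp_def by auto
  qed
  have S1eq: "S1 = Com \<union> Out"
  proof (intro set_eqI iffI)
    fix l assume l: "l \<in> S1"
    then have l1: "1 \<le> l" "l \<le> N" "l < jp" "jp < jplus ws l" and lc: "C (letter ws l) (letter ws j) = -1"
      unfolding S1_def N_def using jpj by auto
    have "l \<noteq> j" using lc Cdiag letn[OF j1] by auto
    show "l \<in> Com \<union> Out"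
    proof (cases "l < j")
      case True then show ?thesis using l1 lc unfolding Com_def by auto
    next
      case False
      then have "j < l" using \<open>l \<noteq> j\<close> by simp
      moreover have "C (letter ws j) (letter ws l) = -1" using lc Csym letn l1 j1 by metis
      ultimately show ?thesis using l1 j1 unfolding Out_def ord_arrow_def N_def jp_def by auto
    qed
  next
    fix l assume l: "l \<in> Com \<union> Out"
    show "l \<in> S1"
    proof (cases "l \<in> Com")
      case True then show ?thesis using jpj unfolding Com_def S1_def N_def by auto
    next
      case False
      then have l1: "l \<in> Out" using l by auto
      then have "1 \<le> l" "l \<le> N" "C (letter ws j) (letter ws l) = -1" "j < l" "l < jp" "jp < jplus ws l"
        unfolding Out_def ord_arrow_def N_def jp_def by auto
      moreover have "C (letter ws l) (letter ws j) = -1" using calculation Csym letn j1 by metis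
      ultimately show ?thesis using jpj unfolding S1_def N_def by auto
    qed
  qed
  have dis0: "Com \<inter> In = {}" unfolding Com_def In_def ord_arrow_def jp_def by auto
  have dis1: "Com \<inter> Out = {}" unfolding Com_def Out_def ord_arrow_def by auto
  have Bj: "P j + Pext P (jminus ws j) = {#beta n C ws j#} + sum P Com + sum P In"
  proof -
    have "P j + Pext P (jminus ws j) = {#beta n C ws j#} + sum P S0"
      using B j1 unfolding N_def S0_def by auto
    also have "sum P S0 = sum P Com + sum P In"
      unfolding S0eq by (rule sum.union_disjoint) (use fin dis0 in auto)
    finally show ?thesis by (simp add: add.assoc)
  qed
  have Bjp0: "P jp + Pext P (jminus ws jp) = {#beta n C ws jp#} + sum P S1"
    using B j1 jpj jpN unfolding N_def S1_def by auto
  have Bjp: "P jp + P j = {#beta n C ws jp#} + sum P Com + sum P Out"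
    using Bjp0 j1 unfolding jmjp S1eq Pext_def
    by (simp add: sum.union_disjoint fin dis1 add.assoc)
  have "({#beta n C ws j#} + P_in C ws P j) + (P j + Pext P (jminus ws j))
      = ({#beta n C ws jp#} + P_out C ws P j) + (P j + Pext P (jminus ws j))"
  proof -
    have "({#beta n C ws j#} + P_in C ws P j) + (P j + Pext P (jminus ws j))
        = {#beta n C ws j#} + sum P In + Pext P (jminus ws j) + (P jp + P j)"
      unfolding P_in_def In_def jp_def by (simp add: ac_simps)
    also have "\<dots> = {#beta n C ws j#} + sum P In + Pext P (jminus ws j) + ({#beta n C ws jp#} + sum P Com + sum P Out)"
      using Bjp by simp
    also have "\<dots> = ({#beta n C ws jp#} + P_out C ws P j) + ({#beta n C ws j#} + sum P Com + sum P In)"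
      unfolding P_out_def Out_def by (simp add: ac_simps)
    also have "\<dots> = ({#beta n C ws jp#} + P_out C ws P j) + (P j + Pext P (jminus ws j))"
      using Bj by simp
    finally show ?thesis .
  qed
  then show "{#beta n C ws j#} + P_in C ws P j = {#beta n C ws (jplus ws j)#} + P_out C ws P j"
    unfolding jp_def by simp
qed

end
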